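(* For $\beta\in\mathbb{N}$, $l,n\in\mathbb{N}$, $r\in\mathbb{Z}$ let $$T_{l,\beta}^{(2)}(n,r)=\frac{l!\,2^l}{\lfloor n/2^{\beta-1}\rfloor!}\sum_{k\equiv r\ (\mathrm{mod}\ 2^{\beta})}\binom nk(-1)^k\binom{(k-r)/2^{\beta}}l.$$ Let $\alpha,c,d,e\in\mathbb{N}$ with $d<2^e$. Then $$T_{l,\alpha+1}^{(2)}\big(2^{\alpha}(2^e+d),\,2^{\alpha}c\big)\equiv\delta_{l,d}\pmod 2\quad\text{for all } l=0,\ldots,d,$$ where $\delta_{l,d}$ is the Kronecker delta.
   Context: The sum runs over all integers $k\equiv r\pmod{2^\beta}$ with $\binom nk=0$ unless $0\le k\le n$; $\binom xl=x(x-1)\cdots(x-l+1)/l!$. For rationals $u,v$, $u\equiv v\pmod 2$ means $\operatorname{ord}_2(u-v)\ge1$. *)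

theory Defs
  imports Complex_Main "HOL-Number_Theory.Cong"
begin

definition cong2_rat :: "rat \<Rightarrow> rat \<Rightarrow> bool" where
  "cong2_rat u v \<longleftrightarrow> (\<exists>a b :: int. odd b \<and> u - v = of_int (2 * a) / of_int b)"

text \<open>T^{(2)}_{l,beta}(n,r). The sum runs over k in {0..n} with k = r (mod 2^beta);
  for such k, (k - r)/2^beta is an integer.\<close>
definition T2 :: "nat \<Rightarrow> nat \<Rightarrow> nat \<Rightarrow> int \<Rightarrow> rat" where
  "T2 l \<beta> n r =
     (of_nat (fact l * 2 ^ l) / of_nat (fact (n div 2 ^ (\<beta> - 1)))) *
     (\<Sum>k \<in> {k \<in> {0..n}. [int k = r] (mod 2 ^ \<beta>)}.
        of_nat (n choose k) * (-1) ^ k *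
        ((of_int ((int k - r) div 2 ^ \<beta>) :: rat) gchoose l))"

end

theory Submission
  imports Defs "HOL-Computational_Algebra.Polynomial"
begin

definition Z2 :: "rat set" where
  "Z2 = {q. \<exists>a b::int. odd b \<and> q = of_int a / of_int b}"

lemma Z2_int[simp]: "of_int a \<in> Z2"
  unfolding Z2_def by (rule CollectI, rule exI[of _ a], rule exI[of _ 1]) simp

lemma Z2_nat[simp]: "of_nat a \<in> Z2"
  using Z2_int[of "int a"] by simp

lemma Z2_0[simp]: "0 \<in> Z2" and Z2_1[simp]: "1 \<in> Z2"
  using Z2_int[of 0] Z2_int[of 1] by simp_all

lemma Z2_Ints: "x \<in> \<int> \<Longrightarrow> x \<in> Z2"
  by (auto elim!: Ints_cases)

lemma Z2_add: "x \<in> Z2 \<Longrightarrow> y \<in> Z2 \<Longrightarrow> x + y \<in> Z2"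
proof -
  assume "x \<in> Z2" "y \<in> Z2"
  then obtain a b c d :: int where "odd b" "x = of_int a / of_int b" "odd d" "y = of_int c / of_int d"
    unfolding Z2_def by blast
  moreover have "of_int b \<noteq> (0::rat)" "of_int d \<noteq> (0::rat)" using \<open>odd b\<close> \<open>odd d\<close> by auto
  ultimately have "x + y = of_int (a*d + c*b) / of_int (b*d)" by (simp add: field_simps)
  moreover have "odd (b*d)" using \<open>odd b\<close> \<open>odd d\<close> by simp
  ultimately show ?thesis unfolding Z2_def by blast
qed

lemma Z2_mult: "x \<in> Z2 \<Longrightarrow> y \<in> Z2 \<Longrightarrow> x * y \<in> Z2"
proof -
  assume "x \<in> Z2" "y \<in> Z2"
  then obtain a b c d :: int where "odd b" "x = of_int a / of_int b" "odd d" "y = of_int c / of_int d"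
    unfolding Z2_def by blast
  then have "x * y = of_int (a*c) / of_int (b*d)" by simp
  moreover have "odd (b*d)" using \<open>odd b\<close> \<open>odd d\<close> by simp
  ultimately show ?thesis unfolding Z2_def by blast
qed

lemma Z2_uminus: "x \<in> Z2 \<Longrightarrow> - x \<in> Z2"
  using Z2_mult[of "-1" x] Z2_int[of "-1"] by simp

lemma Z2_diff: "x \<in> Z2 \<Longrightarrow> y \<in> Z2 \<Longrightarrow> x - y \<in> Z2"
  using Z2_add[of x "-y"] Z2_uminus[of y] by simp

lemma Z2_sum: "(\<And>i. i \<in> A \<Longrightarrow> f i \<in> Z2) \<Longrightarrow> sum f A \<in> Z2"
  by (induction A rule: infinite_finite_induct) (auto intro: Z2_add)

lemma Z2_inv_odd: "odd (u::int) \<Longrightarrow> 1 / of_int u \<in> Z2"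
  unfolding Z2_def by (rule CollectI, rule exI[of _ 1], rule exI[of _ u]) simp

lemma Z2_pow2[simp]: "(2::rat) ^ k \<in> Z2"
  using Z2_int[of "2^k"] by simp

function ds :: "nat \<Rightarrow> nat" where
  "ds n = (if n = 0 then 0 else n mod 2 + ds (n div 2))"
  by auto
termination by (relation "measure id") auto
declare ds.simps[simp del]

lemma ds_le: "ds n \<le> n"
proof (induction n rule: less_induct)
  case (less n)
  show ?case
  proof (cases "n = 0")
    case True then show ?thesis by (simp add: ds.simps)
  next
    case False
    then have "ds (n div 2) \<le> n div 2" using less by simp
    then show ?thesis using False by (subst ds.simps) auto
  qed
qed

lemma ds_pos: "n \<noteq> 0 \<Longrightarrow> ds n \<ge> 1"
proof (induction n rule: less_induct)
  case (less n)
  show ?case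
  proof (cases "n mod 2 = 0")
    case True
    then have "n div 2 \<noteq> 0" "n div 2 < n" using less.prems by auto
    then have "ds (n div 2) \<ge> 1" using less by simp
    then show ?thesis using less.prems by (subst ds.simps) auto
  next
    case False then show ?thesis using less.prems by (subst ds.simps) auto
  qed
qed

lemma ds_double: "ds (2*k) = ds k"
  by (cases "k = 0") (auto simp: ds.simps[of "2*k"])

lemma ds_double1: "ds (2*k+1) = 1 + ds k"
  by (subst ds.simps) simp

lemma ds_pow_add: "d < 2^e \<Longrightarrow> ds (2^e + d) = 1 + ds d"
proof (induction e arbitrary: d)
  case 0
  then show ?case by (subst ds.simps) (simp add: ds.simps[of 0])
next
  case (Suc e)
  have "d div 2 < 2^e" using Suc.prems by auto
  then have IH: "ds (2^e + d div 2) = 1 + ds (d div 2)" using Suc.IH by blast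
  have "2^Suc e + d = 2 * (2^e + d div 2) + d mod 2" by simp
  then show ?case
  proof (cases "even d")
    case True
    then have "2^Suc e + d = 2 * (2^e + d div 2)" "d = 2 * (d div 2)" by auto
    then show ?thesis using IH ds_double by metis
  next
    case False
    have "d = 2 * (d div 2) + 1" using False by presburger
    then have "2^Suc e + d = 2 * (2^e + d div 2) + 1" "d = 2 * (d div 2) + 1" by (simp, simp)
    then show ?thesis using IH ds_double1 by metis
  qed
qed

lemma fact_even_split: "\<exists>u. odd u \<and> fact (2*k) = (2::nat)^k * fact k * u"
proof (induction k)
  case 0 then show ?case by simp
next
  case (Suc k)
  then obtain u where u: "odd u" "fact (2*k) = (2::nat)^k * fact k * u" by blast
  have "fact (2 * Suc k) = (2*k+2) * ((2*k+1) * fact (2*k))"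
    by (simp add: fact_Suc algebra_simps)
  also have "\<dots> = (2*k+2) * ((2*k+1) * (2^k * fact k * u))"
    by (simp only: u(2))
  also have "\<dots> = 2^Suc k * fact (Suc k) * ((2*k+1) * u)"
    by (simp add: algebra_simps)
  finally show ?case using u(1) by (intro exI[of _ "(2*k+1)*u"]) simp
qed

lemma legendre2: "\<exists>u. odd u \<and> fact n = (2::nat)^(n - ds n) * u"
proof (induction n rule: less_induct)
  case (less n)
  show ?case
  proof (cases "n = 0")
    case True then show ?thesis by (simp add: ds.simps)
  next
    case False
    define k where "k = n div 2"
    have kl: "k < n" using False k_def by simp
    obtain u where u: "odd u" "fact k = (2::nat)^(k - ds k) * u" using less kl by blast
    obtain v where v: "odd v" "fact (2*k) = (2::nat)^k * fact k * v" using fact_even_split by blast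
    have dk: "ds k \<le> k" by (rule ds_le)
    have f2: "fact (2*k) = (2::nat)^(2*k - ds k) * (u*v)"
    proof -
      have "fact (2*k) = (2::nat)^k * 2^(k - ds k) * (u * v)" using u v by simp
      also have "(2::nat)^k * 2^(k - ds k) = 2^(2*k - ds k)"
        using dk by (simp add: power_add[symmetric])
      finally show ?thesis .
    qed
    show ?thesis
    proof (cases "even n")
      case True
      then have n: "n = 2*k" using k_def by simp
      show ?thesis using f2 u v by (intro exI[of _ "u*v"]) (simp add: n ds_double)
    next
      case False
      then have n: "n = 2*k+1" using k_def by presburger
      have "fact n = (2::nat)^(2*k - ds k) * ((2*k+1)*(u*v))"
        using f2 by (simp add: n fact_Suc algebra_simps)
      moreover have "n - ds n = 2*k - ds k" using ds_double1[of k] n by simp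
      ultimately show ?thesis using u v by (intro exI[of _ "(2*k+1)*(u*v)"]) simp
    qed
  qed
qed

lemma fact_rat_split: "\<exists>u::int. odd u \<and> (fact n :: rat) = 2^(n - ds n) * of_int u"
proof -
  obtain u where u: "odd u" "fact n = (2::nat)^(n - ds n) * u" using legendre2 by blast
  have "(fact n :: rat) = of_nat (fact n)" by simp
  also have "\<dots> = 2^(n - ds n) * of_int (int u)" by (simp add: u(2))
  finally show ?thesis using u(1) by (intro exI[of _ "int u"]) simp
qed

lemma pow_div_fact_Z2:
  assumes "k \<le> ds n"
  shows "2^(n - k) / fact n \<in> Z2"
proof -
  obtain u::int where u: "odd u" "(fact n :: rat) = 2^(n - ds n) * of_int u"
    using fact_rat_split by blast
  have dn: "ds n \<le> n" by (rule ds_le)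
  have "(2::rat)^(n - k) = 2^(n - ds n) * 2^(ds n - k)"
    using assms dn by (simp add: power_add[symmetric])
  then have "2^(n - k) / fact n = 2^(ds n - k) * (1 / (of_int u :: rat))"
    using u by simp
  then show ?thesis using Z2_mult[OF Z2_pow2 Z2_inv_odd[OF u(1)]] by simp
qed

lemma E1: "j \<ge> 1 \<Longrightarrow> 2^(j-1) / fact j \<in> Z2"
  using pow_div_fact_Z2[of 1 j] ds_pos[of j] by simp

lemma E2: "1 \<le> d' \<Longrightarrow> d' < 2^e \<Longrightarrow> 2^(2^e + d' - 2) / fact (2^e + d') \<in> Z2"
  using pow_div_fact_Z2[of 2 "2^e+d'"] ds_pow_add[of d' e] ds_pos[of d'] by simp

lemma E3: "\<exists>u::int. odd u \<and> 2^(2^e - 1) / (fact (2^e) :: rat) = 1 / of_int u"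
proof -
  obtain u::int where u: "odd u" "(fact (2^e) :: rat) = 2^(2^e - ds (2^e)) * of_int u"
    using fact_rat_split by blast
  have "ds (2^e) = 1" using ds_pow_add[of 0 e] by (simp add: ds.simps[of 0])
  then show ?thesis using u by (intro exI[of _ u]) simp
qed

definition Q :: "int \<Rightarrow> nat \<Rightarrow> nat \<Rightarrow> rat" where
  "Q \<sigma> l j = (\<Prod>u=0..<l. of_nat j - of_int \<sigma> - 2 * of_nat u)"

definition G :: "nat \<Rightarrow> int \<Rightarrow> nat \<Rightarrow> rat" where
  "G i \<sigma> l = (\<Sum>j\<le>i. of_nat (i choose j) * Q \<sigma> l j)"

definition V :: "nat \<Rightarrow> int \<Rightarrow> nat \<Rightarrow> rat" where
  "V i \<sigma> l = (\<Sum>j\<le>i. of_nat (i choose j) * ((-1)^j * Q \<sigma> l j))"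

definition Ssec :: "nat \<Rightarrow> int \<Rightarrow> nat \<Rightarrow> rat" where
  "Ssec i \<sigma> l = (\<Sum>j\<le>i. if even (int j - \<sigma>) then of_nat (i choose j) * Q \<sigma> l j else 0)"

lemma Q_0[simp]: "Q \<sigma> 0 j = 1" by (simp add: Q_def)

lemma Q_Suc: "Q \<sigma> (Suc l) j = Q \<sigma> l j * (of_nat j - of_int \<sigma> - 2 * of_nat l)"
  by (simp add: Q_def)

lemma Q_shift: "Q \<sigma> l (Suc j) = Q (\<sigma> - 1) l j"
  unfolding Q_def by (rule prod.cong) (simp_all add: algebra_simps)

lemma Q_even:
  assumes "of_nat j - of_int \<sigma> = 2 * (of_int y :: rat)"
  shows "Q \<sigma> l j = 2^l * (\<Prod>u=0..<l. of_int y - of_nat u)"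
proof -
  have "Q \<sigma> l j = (\<Prod>u=0..<l. 2 * (of_int y - of_nat u))"
    unfolding Q_def using assms by (intro prod.cong) (simp_all add: algebra_simps)
  also have "\<dots> = (\<Prod>u=0..<l. (2::rat)) * (\<Prod>u=0..<l. of_int y - of_nat u)"
    by (rule prod.distrib)
  also have "\<dots> = 2^l * (\<Prod>u=0..<l. of_int y - of_nat u)"
    by simp
  finally show ?thesis .
qed

lemma sum_choose_times:
  fixes f :: "nat \<Rightarrow> rat"
  shows "(\<Sum>j\<le>Suc i. of_nat (Suc i choose j) * (of_nat j * f j)) =
         of_nat (Suc i) * (\<Sum>j\<le>i. of_nat (i choose j) * f (Suc j))"
proof -
  have "(\<Sum>j\<le>Suc i. of_nat (Suc i choose j) * (of_nat j * f j)) =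
        (\<Sum>j\<le>i. of_nat (Suc i choose Suc j) * (of_nat (Suc j) * f (Suc j)))"
    by (subst sum.atMost_Suc_shift) simp
  also have "\<dots> = (\<Sum>j\<le>i. of_nat (Suc i) * (of_nat (i choose j) * f (Suc j)))"
  proof (rule sum.cong[OF refl])
    fix j
    have "of_nat (Suc i choose Suc j) * (of_nat (Suc j) :: rat) = of_nat (Suc i) * of_nat (i choose j)"
      using Suc_times_binomial[of j i] by (metis mult.commute of_nat_mult)
    then show "of_nat (Suc i choose Suc j) * (of_nat (Suc j) * f (Suc j)) =
               of_nat (Suc i) * (of_nat (i choose j) * f (Suc j))"
      by (metis mult.assoc)
  qed
  also have "\<dots> = of_nat (Suc i) * (\<Sum>j\<le>i. of_nat (i choose j) * f (Suc j))"
    by (simp add: sum_distrib_left)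
  finally show ?thesis .
qed

lemma G_rec: "G (Suc i) \<sigma> (Suc l) =
   of_nat (Suc i) * G i (\<sigma> - 1) l - (of_int \<sigma> + 2 * of_nat l) * G (Suc i) \<sigma> l"
proof -
  have "G (Suc i) \<sigma> (Suc l) = (\<Sum>j\<le>Suc i. of_nat (Suc i choose j) * (of_nat j * Q \<sigma> l j))
        - (\<Sum>j\<le>Suc i. (of_int \<sigma> + 2 * of_nat l) * (of_nat (Suc i choose j) * Q \<sigma> l j))"
    unfolding G_def Q_Suc sum_subtractf[symmetric]
    by (rule sum.cong[OF refl]) (simp add: algebra_simps)
  also have "\<dots> = of_nat (Suc i) * G i (\<sigma> - 1) l - (of_int \<sigma> + 2 * of_nat l) * G (Suc i) \<sigma> l"
    unfolding sum_choose_times G_def sum_distrib_left[symmetric] Q_shift ..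
  finally show ?thesis .
qed

lemma V_rec: "V (Suc i) \<sigma> (Suc l) =
   - of_nat (Suc i) * V i (\<sigma> - 1) l - (of_int \<sigma> + 2 * of_nat l) * V (Suc i) \<sigma> l"
proof -
  have "V (Suc i) \<sigma> (Suc l) = (\<Sum>j\<le>Suc i. of_nat (Suc i choose j) * (of_nat j * ((-1)^j * Q \<sigma> l j)))
        - (\<Sum>j\<le>Suc i. (of_int \<sigma> + 2 * of_nat l) * (of_nat (Suc i choose j) * ((-1)^j * Q \<sigma> l j)))"
    unfolding V_def Q_Suc sum_subtractf[symmetric]
    by (rule sum.cong[OF refl]) (simp add: algebra_simps)
  also have "\<dots> = of_nat (Suc i) * (\<Sum>j\<le>i. of_nat (i choose j) * ((-1)^Suc j * Q (\<sigma> - 1) l j))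
        - (of_int \<sigma> + 2 * of_nat l) * V (Suc i) \<sigma> l"
    unfolding sum_choose_times V_def sum_distrib_left[symmetric] Q_shift ..
  also have "(\<Sum>j\<le>i. of_nat (i choose j) * ((-1)^Suc j * Q (\<sigma> - 1) l j)) = - V i (\<sigma> - 1) l"
    unfolding V_def sum_negf[symmetric] by (rule sum.cong[OF refl]) simp
  finally show ?thesis by (simp only: mult_minus_left mult_minus_right)
qed

lemma V_zero: "l < i \<Longrightarrow> V i \<sigma> l = 0"
proof (induction l arbitrary: i \<sigma>)
  case 0
  then have "V i \<sigma> 0 = (\<Sum>j\<le>i. (-1)^j * of_nat (i choose j))"
    unfolding V_def by (intro sum.cong) simp_all
  then show ?case using choose_alternating_sum[of i] 0 by simp
next
  case (Suc l)
  then obtain i' where i: "i = Suc i'" by (cases i) auto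
  then have "V i' (\<sigma> - 1) l = 0" "V i \<sigma> l = 0" using Suc by auto
  then show ?case using V_rec[of i' \<sigma> l] i by simp
qed

lemma G_form: "l \<le> i \<Longrightarrow> \<exists>\<beta>::nat\<Rightarrow>int. \<beta> l = 1 \<and>
   G i \<sigma> l / fact i = (\<Sum>b\<le>l. of_int (\<beta> b) * 2^(i-b) / fact (i-b))"
proof (induction l arbitrary: i \<sigma>)
  case 0
  have "G i \<sigma> 0 = 2^i"
    unfolding G_def using choose_row_sum[of i] by (simp flip: of_nat_sum)
  then show ?case by (intro exI[of _ "\<lambda>_. 1"]) simp
next
  case (Suc l)
  then obtain i' where i: "i = Suc i'" by (cases i) auto
  obtain \<beta>1 where b1: "\<beta>1 l = 1" "G i' (\<sigma> - 1) l / fact i' = (\<Sum>b\<le>l. of_int (\<beta>1 b) * 2^(i'-b) / fact (i'-b))"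
    using Suc.IH[of i' "\<sigma> - 1"] Suc.prems i by auto
  obtain \<beta>2 where b2: "G i \<sigma> l / fact i = (\<Sum>b\<le>l. of_int (\<beta>2 b) * 2^(i-b) / fact (i-b))"
    using Suc.IH[of i \<sigma>] Suc.prems by auto
  define \<beta> where "\<beta> b = (if b = 0 then 0 else \<beta>1 (b - 1)) - (\<sigma> + 2 * int l) * (if b \<le> l then \<beta>2 b else 0)" for b
  define F where "F b = (2::rat)^(i-b) / fact (i-b)" for b
  have fi: "fact i = of_nat (Suc i') * (fact i' :: rat)" by (simp add: i fact_Suc)
  have e1: "(of_nat (Suc i') * G i' (\<sigma> - 1) l) / fact i = G i' (\<sigma> - 1) l / fact i'"
    unfolding fi by (simp del: of_nat_Suc)
  have "G i \<sigma> (Suc l) / fact i = (of_nat (Suc i') * G i' (\<sigma> - 1) l) / fact i - (of_int \<sigma> + 2 * of_nat l) * (G i \<sigma> l / fact i)"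
    using G_rec[of i' \<sigma> l] by (simp add: i diff_divide_distrib)
  also have "\<dots> = G i' (\<sigma> - 1) l / fact i' - (of_int \<sigma> + 2 * of_nat l) * (G i \<sigma> l / fact i)"
    by (simp only: e1)
  also have "\<dots> = (\<Sum>b\<le>l. of_int (\<beta>1 b) * F (Suc b)) - (of_int \<sigma> + 2 * of_nat l) * (\<Sum>b\<le>l. of_int (\<beta>2 b) * F b)"
  proof -
    have "F (Suc b) = 2^(i'-b) / fact (i'-b)" for b unfolding F_def by (simp add: i)
    then show ?thesis unfolding b1 b2 by (simp add: F_def)
  qed
  also have "\<dots> = (\<Sum>b\<le>Suc l. of_int (\<beta> b) * F b)"
  proof -
    have 1: "(\<Sum>b\<le>Suc l. of_int (if b = 0 then 0 else \<beta>1 (b - 1)) * F b) = (\<Sum>b\<le>l. of_int (\<beta>1 b) * F (Suc b))"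
      by (subst sum.atMost_Suc_shift) simp
    have 2: "(\<Sum>b\<le>Suc l. of_int (if b \<le> l then \<beta>2 b else 0) * F b) = (\<Sum>b\<le>l. of_int (\<beta>2 b) * F b)"
    proof -
      have a: "(\<Sum>b\<le>l. of_int (if b \<le> l then \<beta>2 b else 0) * F b) = (\<Sum>b\<le>l. of_int (\<beta>2 b) * F b)"
        by (rule sum.cong) auto
      show ?thesis unfolding sum.atMost_Suc a by simp
    qed
    show ?thesis unfolding \<beta>_def of_int_diff of_int_mult left_diff_distrib sum_subtractf 1
      by (simp add: 2 mult.assoc sum_distrib_left[symmetric])
  qed
  finally show ?case unfolding F_def by (intro exI[of _ \<beta>]) (simp add: \<beta>_def b1)
qed

lemma Ssec_GV: "2 * Ssec i \<sigma> l = G i \<sigma> l + (if even \<sigma> then 1 else -1) * V i \<sigma> l"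
  unfolding Ssec_def G_def V_def sum_distrib_left sum.distrib[symmetric]
  by (rule sum.cong[OF refl]) (auto simp: algebra_simps)

lemma Ssec_lt: "l < i \<Longrightarrow> Ssec i \<sigma> l = G i \<sigma> l / 2"
  using Ssec_GV[of i \<sigma> l] V_zero[of l i \<sigma>] by simp

lemma two_pow_div_fact: "i \<le> l \<Longrightarrow> (2::rat)^l / fact i \<in> Z2"
proof (cases "i = 0")
  case True then show ?thesis by simp
next
  case False
  assume il: "i \<le> l"
  have "(2::rat)^l = 2^(l - (i - 1)) * 2^(i - 1)" using il False by (simp add: power_add[symmetric])
  then have "(2::rat)^l / fact i = 2^(l - (i - 1)) * (2^(i-1) / fact i)" by simp
  then show ?thesis using Z2_mult[OF Z2_pow2 E1[of i]] False by simp
qed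

lemma ClaimA: "Ssec i \<sigma> l / fact i \<in> Z2"
proof (cases "l < i")
  case True
  obtain \<beta> where b: "G i \<sigma> l / fact i = (\<Sum>b\<le>l. of_int (\<beta> b) * 2^(i-b) / fact (i-b))"
    using G_form[of l i \<sigma>] True by auto
  have "Ssec i \<sigma> l / fact i = (G i \<sigma> l / fact i) / 2" unfolding Ssec_lt[OF True] by simp
  also have "\<dots> = (\<Sum>b\<le>l. of_int (\<beta> b) * (2^(i-b-1) / fact (i-b)))"
    unfolding b sum_divide_distrib
  proof (rule sum.cong[OF refl])
    fix b assume "b \<in> {..l}"
    then have "i - b = Suc (i - b - 1)" using True by auto
    then have "(2::rat)^(i-b) = 2 * 2^(i-b-1)" by (metis power_Suc)
    then show "of_int (\<beta> b) * (2::rat)^(i-b) / fact (i-b) / 2 = of_int (\<beta> b) * (2^(i-b-1) / fact (i-b))"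
      by simp
  qed
  also have "\<dots> \<in> Z2"
    by (rule Z2_sum, rule Z2_mult[OF Z2_int], rule E1) (use True in auto)
  finally show ?thesis .
next
  case False
  then have il: "i \<le> l" by simp
  have "Ssec i \<sigma> l / fact i = (\<Sum>j\<le>i. if even (int j - \<sigma>) then of_nat (i choose j) * Q \<sigma> l j / fact i else 0)"
    unfolding Ssec_def sum_divide_distrib by (rule sum.cong) auto
  also have "\<dots> \<in> Z2"
  proof (rule Z2_sum)
    fix j
    show "(if even (int j - \<sigma>) then of_nat (i choose j) * Q \<sigma> l j / fact i else 0) \<in> Z2"
    proof (cases "even (int j - \<sigma>)")
      case True
      then obtain y where y: "int j - \<sigma> = 2 * y" by blast
      then have "of_nat j - of_int \<sigma> = 2 * (of_int y :: rat)"
        by (metis of_int_diff of_int_mult of_int_of_nat_eq of_int_numeral)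
      then have Qe: "Q \<sigma> l j = 2^l * (\<Prod>u=0..<l. of_int y - of_nat u)" by (rule Q_even)
      have P: "(\<Prod>u=0..<l. of_int y - of_nat u :: rat) \<in> Z2"
        by (rule Z2_Ints) (intro Ints_prod Ints_diff, auto)
      have "of_nat (i choose j) * Q \<sigma> l j / fact i = of_nat (i choose j) * ((\<Prod>u=0..<l. of_int y - of_nat u) * (2^l / fact i))"
        unfolding Qe by simp
      also have "\<dots> \<in> Z2"
        by (intro Z2_mult Z2_nat P two_pow_div_fact il)
      finally show ?thesis using True by simp
    qed simp
  qed
  finally show ?thesis .
qed

lemma ClaimB:
  assumes "d < 2^e" "l \<le> d" "m = 2^e + d"
  shows "(Ssec m \<sigma> l / fact m - (if l = d then 1 else 0)) / 2 \<in> Z2"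
proof -
  have lm: "l < m" using assms by simp
  obtain \<beta> where b: "\<beta> l = 1" "G m \<sigma> l / fact m = (\<Sum>b\<le>l. of_int (\<beta> b) * 2^(m-b) / fact (m-b))"
    using G_form[of l m \<sigma>] lm by auto
  define F where "F b = (2::rat)^(m-b-1) / fact (m-b)" for b
  have S: "Ssec m \<sigma> l / fact m = (\<Sum>b\<le>l. of_int (\<beta> b) * F b)"
  proof -
    have "Ssec m \<sigma> l / fact m = (G m \<sigma> l / fact m) / 2" unfolding Ssec_lt[OF lm] by simp
    also have "\<dots> = (\<Sum>b\<le>l. of_int (\<beta> b) * F b)"
      unfolding b sum_divide_distrib
    proof (rule sum.cong[OF refl])
      fix b assume "b \<in> {..l}"
      then have "m - b = Suc (m - b - 1)" using lm by auto
      then have "(2::rat)^(m-b) = 2 * 2^(m-b-1)" by (metis power_Suc)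
      then show "of_int (\<beta> b) * 2^(m-b) / fact (m-b) / 2 = of_int (\<beta> b) * F b"
        by (simp add: F_def)
    qed
    finally show ?thesis .
  qed
  have Fsmall: "F b / 2 \<in> Z2" if "b < d" for b
  proof -
    have "F b / 2 = 2^(2^e + (d - b) - 2) / fact (2^e + (d - b))"
    proof -
      have mb: "m - b = 2^e + (d - b)" using that assms by simp
      have "(2::nat)^e \<ge> 1" by simp
      then have "m - b - 1 = Suc (2^e + (d - b) - 2)" using mb that by linarith
      then have "(2::rat)^(m-b-1) = 2 * 2^(2^e + (d - b) - 2)" by (metis power_Suc)
      then show ?thesis unfolding F_def mb by simp
    qed
    also have "\<dots> \<in> Z2" using E2[of "d - b" e] that assms by simp
    finally show ?thesis .
  qed
  show ?thesis
  proof (cases "l = d")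
    case False
    then have "l < d" using assms by simp
    have "(Ssec m \<sigma> l / fact m - (if l = d then 1 else 0)) / 2 = (\<Sum>b\<le>l. of_int (\<beta> b) * (F b / 2))"
      using False unfolding S by (simp add: sum_divide_distrib[symmetric])
    also have "\<dots> \<in> Z2" using Fsmall \<open>l < d\<close> by (intro Z2_sum Z2_mult Z2_int) auto
    finally show ?thesis .
  next
    case True
    obtain u::int where u: "odd u" "2^(2^e - 1) / (fact (2^e) :: rat) = 1 / of_int u" using E3 by blast
    have Fd: "F d = 1 / of_int u" unfolding F_def using u assms by simp
    have "(Ssec m \<sigma> l / fact m - (if l = d then 1 else 0)) / 2 =
          (\<Sum>b<d. of_int (\<beta> b) * (F b / 2)) + (F d - 1) / 2"
    proof -
      have S2: "Ssec m \<sigma> l / fact m = (\<Sum>b<d. of_int (\<beta> b) * F b) + F d"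
      proof -
        have "{..d} = insert d {..<d}" by auto
        then show ?thesis using S b(1) True by simp
      qed
      show ?thesis unfolding S2 using True
        by (simp add: sum_divide_distrib[symmetric] add_divide_distrib diff_divide_distrib)
    qed
    also have "\<dots> \<in> Z2"
    proof (rule Z2_add)
      show "(\<Sum>b<d. of_int (\<beta> b) * (F b / 2)) \<in> Z2" using Fsmall by (intro Z2_sum Z2_mult Z2_int) auto
      have "even (1 - u)" using u(1) by simp
      then obtain k where k: "1 - u = 2 * k" by (elim evenE)
      have "u \<noteq> 0" using u(1) by auto
      have k': "1 - of_int u = 2 * (of_int k :: rat)"
        using arg_cong[OF k, of "of_int :: int \<Rightarrow> rat"] by simp
      have "(F d - 1) / 2 = (1 - of_int u) / (2 * of_int u)" unfolding Fd using \<open>u \<noteq> 0\<close>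
        by (simp add: field_simps)
      also have "\<dots> = of_int k * (1 / of_int u)" unfolding k' using \<open>u \<noteq> 0\<close> by simp
      finally have "(F d - 1) / 2 = of_int k * (1 / of_int u)" .
      then show "(F d - 1) / 2 \<in> Z2" using Z2_mult[OF Z2_int Z2_inv_odd[OF u(1)]] by simp
    qed
    finally show ?thesis .
  qed
qed

definition Phi :: "(nat \<Rightarrow> rat) \<Rightarrow> rat poly \<Rightarrow> rat" where
  "Phi w p = (\<Sum>k\<le>degree p. coeff p k * w k)"

lemma Phi_bound: "degree p \<le> N \<Longrightarrow> Phi w p = (\<Sum>k\<le>N. coeff p k * w k)"
  unfolding Phi_def
  by (rule sum.mono_neutral_left) (auto simp: coeff_eq_0)

lemma Phi_add: "Phi w (p + q) = Phi w p + Phi w q"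
proof -
  define N where "N = max (degree p) (degree q)"
  have "degree (p + q) \<le> N" "degree p \<le> N" "degree q \<le> N"
    unfolding N_def by (auto intro: degree_add_le)
  then show ?thesis by (simp add: Phi_bound sum.distrib algebra_simps)
qed

lemma Phi_0[simp]: "Phi w 0 = 0" by (simp add: Phi_def)

lemma Phi_sum: "Phi w (\<Sum>i\<in>A. f i) = (\<Sum>i\<in>A. Phi w (f i))"
  by (induction A rule: infinite_finite_induct) (auto simp: Phi_add)

lemma Phi_smult: "Phi w (smult a p) = a * Phi w p"
  by (simp add: Phi_def sum_distrib_left algebra_simps)

lemma Phi_monom: "Phi w (monom a k) = a * w k"
proof -
  have "Phi w (monom a k) = (\<Sum>j\<le>k. coeff (monom a k) j * w j)"
    by (rule Phi_bound) (rule degree_monom_le)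
  also have "\<dots> = (\<Sum>j\<le>k. if j = k then a * w k else 0)"
    by (rule sum.cong) (auto simp: coeff_monom)
  also have "\<dots> = a * w k" by simp
  finally show ?thesis .
qed

lemma binom_monom:
  "(1 + monom (a::rat) s) ^ i = (\<Sum>j\<le>i. monom (of_nat (i choose j) * a^j) (s * j))"
proof -
  have "(1 + monom a s) ^ i = (monom a s + 1) ^ i" by (simp add: add.commute)
  also have "\<dots> = (\<Sum>j\<le>i. of_nat (i choose j) * monom a s ^ j * 1 ^ (i - j))"
    by (rule binomial_ring)
  also have "\<dots> = (\<Sum>j\<le>i. monom (of_nat (i choose j) * a^j) (s * j))"
    by (rule sum.cong) (simp_all add: monom_power of_nat_monom mult_monom)
  finally show ?thesis .
qed

lemma Phi_binom: "Phi w ((1 + monom 1 s) ^ i * q) =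
   (\<Sum>t\<le>degree q. coeff q t * (\<Sum>j\<le>i. of_nat (i choose j) * w (s * j + t)))"
proof -
  have q: "q = (\<Sum>t\<le>degree q. monom (coeff q t) t)" by (simp add: poly_as_sum_of_monoms)
  have "(1 + monom 1 s) ^ i * q = (\<Sum>j\<le>i. \<Sum>t\<le>degree q. monom (of_nat (i choose j) * coeff q t) (s * j + t))"
    apply (subst q, subst binom_monom)
    by (simp add: sum_distrib_left sum_distrib_right mult_monom) (rule sum.swap)
  then have "Phi w ((1 + monom 1 s) ^ i * q) = (\<Sum>j\<le>i. \<Sum>t\<le>degree q. of_nat (i choose j) * coeff q t * w (s * j + t))"
    by (simp add: Phi_sum Phi_monom)
  also have "\<dots> = (\<Sum>t\<le>degree q. coeff q t * (\<Sum>j\<le>i. of_nat (i choose j) * w (s * j + t)))"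
    by (subst sum.swap) (simp add: sum_distrib_left algebra_simps)
  finally show ?thesis .
qed

definition intpoly :: "rat poly \<Rightarrow> bool" where
  "intpoly p \<longleftrightarrow> (\<forall>k. coeff p k \<in> \<int>)"

lemma intpoly_add: "intpoly p \<Longrightarrow> intpoly q \<Longrightarrow> intpoly (p + q)"
  by (auto simp: intpoly_def)

lemma intpoly_mult: "intpoly p \<Longrightarrow> intpoly q \<Longrightarrow> intpoly (p * q)"
  unfolding intpoly_def coeff_mult by (auto intro!: Ints_sum Ints_mult)

lemma intpoly_monom: "a \<in> \<int> \<Longrightarrow> intpoly (monom a k)"
  by (auto simp: intpoly_def coeff_monom)

lemma intpoly_smult2: "intpoly p \<Longrightarrow> intpoly (smult 2 p)"
  by (auto simp: intpoly_def)

lemma intpoly_power: "intpoly p \<Longrightarrow> intpoly (p ^ n)"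
proof (induction n)
  case 0 then show ?case by (simp add: intpoly_def)
next
  case (Suc n) then show ?case using intpoly_mult[of p "p^n"] by simp
qed

lemma decomp: "\<exists>h. intpoly h \<and> (1 + monom (-1::rat) 1) ^ (2^a) = 1 + monom 1 (2^a) + smult 2 h"
proof (induction a)
  case 0
  show ?case
    by (rule exI[of _ "monom (-1) 1"]) (simp add: intpoly_monom smult_monom add.assoc add_monom)
next
  case (Suc a)
  then obtain h where h: "intpoly h" "(1 + monom (-1::rat) 1) ^ (2^a) = 1 + monom 1 (2^a) + smult 2 h" by blast
  define X where "X = monom (1::rat) (2^a)"
  have X2: "X * X = monom 1 (2^Suc a)" unfolding X_def by (simp add: mult_monom mult_2)
  have "(1 + monom (-1::rat) 1) ^ (2^Suc a) = ((1 + monom (-1::rat) 1) ^ (2^a)) * ((1 + monom (-1::rat) 1) ^ (2^a))"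
    by (simp add: power_add[symmetric] mult_2)
  also have "\<dots> = (1 + X + smult 2 h) * (1 + X + smult 2 h)" by (simp only: h(2) X_def)
  also have "\<dots> = 1 + X * X + smult 2 (X + smult 2 (h + X * h + h * h))"
    by (simp add: algebra_simps flip: numeral_mult_conv_smult)
  finally have "(1 + monom (-1::rat) 1) ^ (2^Suc a) = 1 + monom 1 (2^Suc a) + smult 2 (X + smult 2 (h + X * h + h * h))"
    unfolding X2 .
  moreover have "intpoly (X + smult 2 (h + X * h + h * h))"
    unfolding X_def by (intro intpoly_add intpoly_smult2 intpoly_mult intpoly_monom h(1)) auto
  ultimately show ?case by blast
qed

definition wt :: "nat \<Rightarrow> nat \<Rightarrow> nat \<Rightarrow> nat \<Rightarrow> rat" where
  "wt \<alpha> c l k = (if [int k = 2^\<alpha> * int c] (mod 2^(\<alpha>+1))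
     then fact l * 2^l * ((of_int ((int k - 2^\<alpha> * int c) div 2^(\<alpha>+1)) :: rat) gchoose l) else 0)"

lemma w_nd:
  assumes "\<not> 2^\<alpha> dvd t"
  shows "wt \<alpha> c l (2^\<alpha> * j + t) = 0"
proof (rule ccontr)
  assume "wt \<alpha> c l (2^\<alpha> * j + t) \<noteq> 0"
  then have "[int (2^\<alpha> * j + t) = 2^\<alpha> * int c] (mod 2^(\<alpha>+1))" unfolding wt_def by (auto split: if_splits)
  then have "(2::int)^(\<alpha>+1) dvd (int (2^\<alpha> * j + t) - 2^\<alpha> * int c)" by (simp add: cong_iff_dvd_diff)
  moreover have "(2::int)^\<alpha> dvd 2^(\<alpha>+1)" by (rule le_imp_power_dvd) simp
  ultimately have "(2::int)^\<alpha> dvd (int (2^\<alpha> * j + t) - 2^\<alpha> * int c)" using dvd_trans by blast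
  moreover have "(2::int)^\<alpha> dvd 2^\<alpha> * (int j - int c)" by simp
  ultimately have "(2::int)^\<alpha> dvd (int (2^\<alpha> * j + t) - 2^\<alpha> * int c) - 2^\<alpha> * (int j - int c)"
    by (rule dvd_diff)
  moreover have "(int (2^\<alpha> * j + t) - 2^\<alpha> * int c) - 2^\<alpha> * (int j - int c) = int t"
    by (simp add: algebra_simps)
  ultimately have "(2::int)^\<alpha> dvd int t" by metis
  then have "int (2^\<alpha>) dvd int t" by simp
  then have "2^\<alpha> dvd t" by (simp only: int_dvd_int_iff)
  then show False using assms by simp
qed

lemma w_d:
  "wt \<alpha> c l (2^\<alpha> * j + 2^\<alpha> * \<tau>) = (if even (int j - (int c - int \<tau>)) then Q (int c - int \<tau>) l j else 0)"
proof -
  define x where "x = int j - (int c - int \<tau>)"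
  have e: "int (2^\<alpha> * j + 2^\<alpha> * \<tau>) - 2^\<alpha> * int c = 2^\<alpha> * x" unfolding x_def by (simp add: algebra_simps)
  have p: "(2::int)^(\<alpha>+1) = 2^\<alpha> * 2" by simp
  have wx: "wt \<alpha> c l (2^\<alpha> * j + 2^\<alpha> * \<tau>) = (if even x then fact l * 2^l * ((of_int (x div 2) :: rat) gchoose l) else 0)"
  proof -
    have cong: "[int (2^\<alpha> * j + 2^\<alpha> * \<tau>) = 2^\<alpha> * int c] (mod 2^(\<alpha>+1)) \<longleftrightarrow> even x"
      by (simp only: cong_iff_dvd_diff e p) simp
    have dv: "(int (2^\<alpha> * j + 2^\<alpha> * \<tau>) - 2^\<alpha> * int c) div 2^(\<alpha>+1) = x div 2"
      by (simp only: e p) simp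
    show ?thesis by (simp only: wt_def cong dv)
  qed
  show ?thesis
  proof (cases "even x")
    case True
    then obtain y where y: "x = 2 * y" by blast
    have "of_nat j - of_int (int c - int \<tau>) = 2 * (of_int y :: rat)"
      using arg_cong[OF y, of "of_int :: int \<Rightarrow> rat"] unfolding x_def by simp
    then have Qe: "Q (int c - int \<tau>) l j = 2^l * (\<Prod>u=0..<l. of_int y - of_nat u)" by (rule Q_even)
    have "wt \<alpha> c l (2^\<alpha> * j + 2^\<alpha> * \<tau>) = 2^l * (fact l * ((of_int y :: rat) gchoose l))"
      unfolding wx using True y by simp
    also have "\<dots> = Q (int c - int \<tau>) l j" unfolding Qe gbinomial_mult_fact ..
    finally show ?thesis using True x_def by simp
  next
    case False
    have nx: "odd (int j - (int c - int \<tau>))" using False unfolding x_def .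
    show ?thesis unfolding wx by (simp only: if_not_P[OF False] if_not_P[OF nx])
  qed
qed

definition Psi :: "nat \<Rightarrow> nat \<Rightarrow> nat \<Rightarrow> nat \<Rightarrow> nat \<Rightarrow> rat" where
  "Psi \<alpha> c l i t = (\<Sum>j\<le>i. of_nat (i choose j) * wt \<alpha> c l (2^\<alpha> * j + t))"

lemma Psi_Z2: "Psi \<alpha> c l i t / fact i \<in> Z2"
proof (cases "2^\<alpha> dvd t")
  case True
  then obtain \<tau> where t: "t = 2^\<alpha> * \<tau>" by blast
  have "Psi \<alpha> c l i t = Ssec i (int c - int \<tau>) l"
    unfolding Psi_def Ssec_def t w_d by (rule sum.cong) auto
  then show ?thesis using ClaimA by simp
next
  case False
  then have "Psi \<alpha> c l i t = 0" unfolding Psi_def by (simp add: w_nd)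
  then show ?thesis by simp
qed

lemma Psi_0: "Psi \<alpha> c l m 0 = Ssec m (int c) l"
  unfolding Psi_def Ssec_def using w_d[of \<alpha> c l _ 0] by (intro sum.cong) auto

lemma T2_link:
  "T2 l (\<alpha> + 1) (2^\<alpha> * m) (2^\<alpha> * int c) = Phi (wt \<alpha> c l) ((1 + monom (-1) 1) ^ (2^\<alpha> * m)) / fact m"
proof -
  define n where "n = 2^\<alpha> * m"
  have "Phi (wt \<alpha> c l) ((1 + monom (-1) 1) ^ n) = (\<Sum>k\<le>n. of_nat (n choose k) * (-1)^k * wt \<alpha> c l k)"
    unfolding binom_monom by (simp add: Phi_sum Phi_monom)
  moreover have "T2 l (\<alpha> + 1) n (2^\<alpha> * int c) = (\<Sum>k\<le>n. of_nat (n choose k) * (-1)^k * wt \<alpha> c l k) / fact m"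
  proof -
    have nd: "n div 2 ^ (\<alpha> + 1 - 1) = m" unfolding n_def by simp
    have "T2 l (\<alpha> + 1) n (2^\<alpha> * int c) = (fact l * 2^l / fact m) *
      (\<Sum>k\<le>n. if [int k = 2^\<alpha> * int c] (mod 2^(\<alpha>+1)) then of_nat (n choose k) * (-1)^k *
        ((of_int ((int k - 2^\<alpha> * int c) div 2^(\<alpha>+1)) :: rat) gchoose l) else 0)"
    proof -
      have F: "(\<Sum>k\<in>{k \<in> {0..n}. P k}. f k) = (\<Sum>k\<le>n. if P k then f k else 0)" for P and f :: "nat \<Rightarrow> rat"
        by (subst sum.inter_filter) (simp_all add: atLeast0AtMost)
      show ?thesis unfolding T2_def nd F by simp
    qed
    also have "\<dots> = (\<Sum>k\<le>n. of_nat (n choose k) * (-1)^k * wt \<alpha> c l k) / fact m"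
      unfolding sum_distrib_left sum_divide_distrib by (rule sum.cong) (auto simp: wt_def)
    finally show ?thesis .
  qed
  ultimately show ?thesis unfolding n_def by simp
qed

lemma cong2_from_Z2: "(u - v) / 2 \<in> Z2 \<Longrightarrow> cong2_rat u v"
proof -
  assume "(u - v) / 2 \<in> Z2"
  then obtain a b :: int where ab: "odd b" "(u - v) / 2 = of_int a / of_int b" unfolding Z2_def by blast
  then have "u - v = of_int (2 * a) / of_int b" by (simp add: field_simps)
  then show ?thesis unfolding cong2_rat_def using ab(1) by blast
qed

lemma coef_fact:
  assumes "i < m"
  shows "of_nat (m choose i) * 2^(m-i) / (2 * fact m) = (2^(m-i-1) / fact (m-i)) * (1 / (fact i :: rat))"
proof -
  have "(fact m :: rat) = fact i * fact (m-i) * of_nat (m choose i)"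
    using binomial_fact_lemma[of i m] assms by (metis less_imp_le of_nat_fact of_nat_mult)
  moreover have "(2::rat)^(m-i) = 2 * 2^(m-i-1)" using assms
    by (metis Suc_diff_Suc diff_Suc_1 power_Suc)
  moreover have "(m choose i) \<noteq> 0" using assms by simp
  ultimately show ?thesis by (simp add: field_simps)
qed

theorem theorem4p1:
  fixes \<alpha> c d e l :: nat
  assumes "d < 2 ^ e" and "l \<le> d"
  shows "cong2_rat (T2 l (\<alpha> + 1) (2 ^ \<alpha> * (2 ^ e + d)) (2 ^ \<alpha> * int c))
                   (if l = d then 1 else 0)"
proof -
  define m where "m = 2^e + d"
  define w where "w = wt \<alpha> c l"
  define A where "A = (1 + monom (1::rat) (2^\<alpha>))"
  obtain h where h: "intpoly h" "(1 + monom (-1::rat) 1) ^ (2^\<alpha>) = A + smult 2 h"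
    using decomp[of \<alpha>] unfolding A_def by blast
  define R where "R i = (\<Sum>t\<le>degree (h^(m-i)). coeff (h^(m-i)) t * Psi \<alpha> c l i t)" for i
  have "(1 + monom (-1::rat) 1) ^ (2^\<alpha> * m) = (A + smult 2 h) ^ m"
    by (simp only: power_mult h(2))
  also have "\<dots> = (\<Sum>i\<le>m. of_nat (m choose i) * A^i * (smult 2 h)^(m-i))"
    by (rule binomial_ring)
  also have "\<dots> = (\<Sum>i\<le>m. smult (of_nat (m choose i) * 2^(m-i)) (A^i * h^(m-i)))"
    by (rule sum.cong) (simp_all add: smult_power of_nat_poly mult_smult_right mult.commute)
  finally have P: "(1 + monom (-1::rat) 1) ^ (2^\<alpha> * m) = (\<Sum>i\<le>m. smult (of_nat (m choose i) * 2^(m-i)) (A^i * h^(m-i)))" .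
  have PhiA: "Phi w (A^i * q) = (\<Sum>t\<le>degree q. coeff q t * Psi \<alpha> c l i t)" for i q
    unfolding A_def Phi_binom Psi_def w_def ..
  have T: "T2 l (\<alpha> + 1) (2^\<alpha> * m) (2^\<alpha> * int c) = (\<Sum>i\<le>m. of_nat (m choose i) * 2^(m-i) * R i) / fact m"
    unfolding T2_link P Phi_sum Phi_smult w_def[symmetric] PhiA R_def ..
  have Rm: "R m = Ssec m (int c) l"
    unfolding R_def by (simp add: Psi_0)
  have "(T2 l (\<alpha> + 1) (2^\<alpha> * m) (2^\<alpha> * int c) - (if l = d then 1 else 0)) / 2 =
        (Ssec m (int c) l / fact m - (if l = d then 1 else 0)) / 2 +
        (\<Sum>i<m. (2^(m-i-1) / fact (m-i)) * (\<Sum>t\<le>degree (h^(m-i)). coeff (h^(m-i)) t * (Psi \<alpha> c l i t / fact i)))"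
  proof -
    have s: "{..m} = insert m {..<m}" by auto
    have "(\<Sum>i\<le>m. of_nat (m choose i) * 2^(m-i) * R i) / fact m / 2 =
          Ssec m (int c) l / fact m / 2 + (\<Sum>i<m. of_nat (m choose i) * 2^(m-i) / (2 * fact m) * R i)"
      unfolding s by (simp add: Rm add_divide_distrib sum_divide_distrib mult.commute)
    also have "(\<Sum>i<m. of_nat (m choose i) * 2^(m-i) / (2 * fact m) * R i) =
       (\<Sum>i<m. (2^(m-i-1) / fact (m-i)) * (\<Sum>t\<le>degree (h^(m-i)). coeff (h^(m-i)) t * (Psi \<alpha> c l i t / fact i)))"
    proof (rule sum.cong[OF refl])
      fix i assume "i \<in> {..<m}"
      then have "i < m" by simp
      show "of_nat (m choose i) * 2^(m-i) / (2 * fact m) * R i =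
         (2^(m-i-1) / fact (m-i)) * (\<Sum>t\<le>degree (h^(m-i)). coeff (h^(m-i)) t * (Psi \<alpha> c l i t / fact i))"
        unfolding coef_fact[OF \<open>i < m\<close>] R_def by (simp add: sum_distrib_left sum_divide_distrib algebra_simps)
    qed
    finally show ?thesis unfolding T by (simp add: diff_divide_distrib)
  qed
  also have "\<dots> \<in> Z2"
  proof (rule Z2_add)
    show "(Ssec m (int c) l / fact m - (if l = d then 1 else 0)) / 2 \<in> Z2"
      using ClaimB[OF assms m_def] .
    show "(\<Sum>i<m. (2^(m-i-1) / fact (m-i)) * (\<Sum>t\<le>degree (h^(m-i)). coeff (h^(m-i)) t * (Psi \<alpha> c l i t / fact i))) \<in> Z2"
    proof (rule Z2_sum, rule Z2_mult)
      fix i assume "i \<in> {..<m}"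
      then show "2^(m-i-1) / fact (m-i) \<in> Z2" using E1[of "m-i"] by simp
      have ip: "intpoly (h^(m-i))" by (rule intpoly_power[OF h(1)])
      show "(\<Sum>t\<le>degree (h^(m-i)). coeff (h^(m-i)) t * (Psi \<alpha> c l i t / fact i)) \<in> Z2"
        using ip unfolding intpoly_def by (intro Z2_sum Z2_mult Z2_Ints Psi_Z2) auto
    qed
  qed
  finally show ?thesis unfolding m_def by (rule cong2_from_Z2)
qed

end
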